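(* Let $U\subseteq\mathbb{R}^4$ be open with coordinates $(x^1,x^2,x^3,x^4)$ and let $a,b,p,q,s$ be real constants with $a^2+b^2\neq0$. Consider the Lorentzian metric $$g=2\,dx^1dx^4+(dx^2)^2+(dx^3)^2+\Big(x^4\big(a(x^2)^2+b(x^3)^2\big)+p(x^2)^2+2qx^2x^3+s(x^3)^2\Big)(dx^4)^2$$ on $U$. Then: (a) $(U,g)$ is Einstein if and only if it is Ricci flat, if and only if $b=-a$ and $s=-p$; (b) $(U,g)$ is conformally flat if and only if $b=a$, $s=p$ and $q=0$.
   Context: Einstein means $\varrho=c\,g$ for a real constant $c$, where $\varrho$ is the Ricci tensor; Ricci flat means $\varrho=0$; conformally flat means the Weyl tensor $W_{ijkh}=R_{ijkh}-\frac12(g_{ik}\varrho_{jh}+g_{jh}\varrho_{ik}-g_{ih}\varrho_{jk}-g_{jk}\varrho_{ih})+\frac{\tau}{6}(g_{ik}g_{jh}-g_{ih}g_{jk})$ vanishes identically, $\tau$ the scalar curvature. *)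

theory Defs
  imports "HOL-Analysis.Analysis"
begin

text \<open>Points of R^4 are vectors of type real^4; coordinate indices are elements of the
  finite type 4.  NOTE: numerals in type 4 are taken mod 4, so the fourth coordinate
  index, written 4 below, is the same element as 0; the indices 1,2,3,4 are pairwise distinct.
  A (pseudo-)metric field is given by its components g x i j = g(d_i, d_j) at x.\<close>

type_synonym metric4 = "real^4 \<Rightarrow> 4 \<Rightarrow> 4 \<Rightarrow> real"

definition partial4 :: "4 \<Rightarrow> (real^4 \<Rightarrow> real) \<Rightarrow> real^4 \<Rightarrow> real" where
  "partial4 i f x = deriv (\<lambda>t. f (x + t *\<^sub>R axis i 1)) 0"

definition ginv :: "metric4 \<Rightarrow> real^4 \<Rightarrow> 4 \<Rightarrow> 4 \<Rightarrow> real" where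
  "ginv g x i j = matrix_inv (\<chi> k l. g x k l) $ i $ j"

definition christoffel :: "metric4 \<Rightarrow> real^4 \<Rightarrow> 4 \<Rightarrow> 4 \<Rightarrow> 4 \<Rightarrow> real" where
  "christoffel g x k i j = (1/2) * (\<Sum>l\<in>UNIV. ginv g x k l *
      (partial4 i (\<lambda>y. g y j l) x + partial4 j (\<lambda>y. g y i l) x - partial4 l (\<lambda>y. g y i j) x))"

text \<open>Curvature operator components: R(d_i,d_j) d_k = sum_l R^l_{kij} d_l, with
  R(X,Y) = nabla_X nabla_Y - nabla_Y nabla_X - nabla_[X,Y].\<close>
definition riem13 :: "metric4 \<Rightarrow> real^4 \<Rightarrow> 4 \<Rightarrow> 4 \<Rightarrow> 4 \<Rightarrow> 4 \<Rightarrow> real" where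
  "riem13 g x l k i j =
     partial4 i (\<lambda>y. christoffel g y l j k) x - partial4 j (\<lambda>y. christoffel g y l i k) x
     + (\<Sum>m\<in>UNIV. christoffel g x l i m * christoffel g x m j k
                  - christoffel g x l j m * christoffel g x m i k)"

text \<open>Curvature tensor R_{ijkh} = g(R(d_i,d_j) d_h, d_k), the convention for which the
  given Weyl tensor formula is correct (Ricci tensor = contraction of R_{ijkh} over i,k).\<close>
definition riem :: "metric4 \<Rightarrow> real^4 \<Rightarrow> 4 \<Rightarrow> 4 \<Rightarrow> 4 \<Rightarrow> 4 \<Rightarrow> real" where
  "riem g x i j k h = (\<Sum>l\<in>UNIV. g x k l * riem13 g x l h i j)"

definition ricci :: "metric4 \<Rightarrow> real^4 \<Rightarrow> 4 \<Rightarrow> 4 \<Rightarrow> real" where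
  "ricci g x j h = (\<Sum>i\<in>UNIV. \<Sum>k\<in>UNIV. ginv g x i k * riem g x i j k h)"

definition scal :: "metric4 \<Rightarrow> real^4 \<Rightarrow> real" where
  "scal g x = (\<Sum>j\<in>UNIV. \<Sum>h\<in>UNIV. ginv g x j h * ricci g x j h)"

definition weyl :: "metric4 \<Rightarrow> real^4 \<Rightarrow> 4 \<Rightarrow> 4 \<Rightarrow> 4 \<Rightarrow> 4 \<Rightarrow> real" where
  "weyl g x i j k h = riem g x i j k h
     - (1/2) * (g x i k * ricci g x j h + g x j h * ricci g x i k
                - g x i h * ricci g x j k - g x j k * ricci g x i h)
     + (scal g x / 6) * (g x i k * g x j h - g x i h * g x j k)"

definition einstein_on :: "metric4 \<Rightarrow> (real^4) set \<Rightarrow> bool" where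
  "einstein_on g U \<longleftrightarrow> (\<exists>c::real. \<forall>x\<in>U. \<forall>i j. ricci g x i j = c * g x i j)"

definition ricci_flat_on :: "metric4 \<Rightarrow> (real^4) set \<Rightarrow> bool" where
  "ricci_flat_on g U \<longleftrightarrow> (\<forall>x\<in>U. \<forall>i j. ricci g x i j = 0)"

definition conformally_flat_on :: "metric4 \<Rightarrow> (real^4) set \<Rightarrow> bool" where
  "conformally_flat_on g U \<longleftrightarrow> (\<forall>x\<in>U. \<forall>i j k h. weyl g x i j k h = 0)"

definition walkerF :: "real \<Rightarrow> real \<Rightarrow> real \<Rightarrow> real \<Rightarrow> real \<Rightarrow> real^4 \<Rightarrow> real" where
  "walkerF a b p q s x = x$4 * (a * (x$2)^2 + b * (x$3)^2) + p * (x$2)^2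
      + 2 * q * x$2 * x$3 + s * (x$3)^2"

definition walker_metric :: "real \<Rightarrow> real \<Rightarrow> real \<Rightarrow> real \<Rightarrow> real \<Rightarrow> metric4" where
  "walker_metric a b p q s x i j =
     (if (i = 1 \<and> j = 4) \<or> (i = 4 \<and> j = 1) then 1
      else if i = j \<and> (i = 2 \<or> i = 3) then 1
      else if i = 4 \<and> j = 4 then walkerF a b p q s x
      else 0)"

end

theory Submission imports Defs begin

lemma matrix_inv_eq:
  fixes A B :: "real^'n^'n"
  assumes "A ** B = mat 1" "B ** A = mat 1"
  shows "matrix_inv A = B"
proof -
  have ex: "\<exists>A'. A ** A' = mat 1 \<and> A' ** A = mat 1" using assms by blast
  obtain A' where "A ** A' = mat 1" "A' ** A = mat 1" and e: "matrix_inv A = A'"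
    using someI_ex[OF ex] unfolding matrix_inv_def by blast
  then have "B = A'"
    by (metis assms(2) matrix_mul_assoc matrix_mul_rid)
  then show ?thesis using e by simp
qed

lemma axis_comp: "axis i (1::real) $ k = (if k = i then 1 else 0)"
  by (simp add: axis_def)

definition Ginv :: "real \<Rightarrow> 4 \<Rightarrow> 4 \<Rightarrow> real" where
  "Ginv F i j = (if i = 1 \<and> j = 1 then -F else if (i = 1 \<and> j = 4) \<or> (i = 4 \<and> j = 1) then 1
     else if i = j \<and> (i = 2 \<or> i = 3) then 1 else 0)"

lemma ginv_walker: "ginv (walker_metric a b p q s) x i j = Ginv (walkerF a b p q s x) i j"
proof -
  let ?M = "\<chi> k l. walker_metric a b p q s x k l"
  let ?N = "\<chi> k l. Ginv (walkerF a b p q s x) k l"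
  have 1: "?M ** ?N = mat 1"
    by (simp add: vec_eq_iff matrix_matrix_mult_def mat_def sum_4 forall_4 walker_metric_def Ginv_def)
  have 2: "?N ** ?M = mat 1"
    by (simp add: vec_eq_iff matrix_matrix_mult_def mat_def sum_4 forall_4 walker_metric_def Ginv_def)
  show ?thesis unfolding ginv_def matrix_inv_eq[OF 1 2] by simp
qed

definition P :: "real \<Rightarrow> real \<Rightarrow> real \<Rightarrow> real \<Rightarrow> real \<Rightarrow> real \<Rightarrow> real \<Rightarrow> real \<Rightarrow> real \<Rightarrow> real \<Rightarrow> real \<Rightarrow> real^4 \<Rightarrow> real" where
  "P c0 c2 c3 c4 c22 c33 c23 c42 c43 c422 c433 y = c0 + c2*y$2 + c3*y$3 + c4*y$4 + c22*(y$2)^2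
     + c33*(y$3)^2 + c23*y$2*y$3 + c42*y$4*y$2 + c43*y$4*y$3 + c422*y$4*(y$2)^2 + c433*y$4*(y$3)^2"

definition dP :: "4 \<Rightarrow> real \<Rightarrow> real \<Rightarrow> real \<Rightarrow> real \<Rightarrow> real \<Rightarrow> real \<Rightarrow> real \<Rightarrow> real \<Rightarrow> real \<Rightarrow> real \<Rightarrow> real \<Rightarrow> real^4 \<Rightarrow> real" where
  "dP i c0 c2 c3 c4 c22 c33 c23 c42 c43 c422 c433 y =
    (if i = 2 then c2 + 2*c22*y$2 + c23*y$3 + c42*y$4 + 2*c422*y$4*y$2
     else if i = 3 then c3 + 2*c33*y$3 + c23*y$2 + c43*y$4 + 2*c433*y$4*y$3
     else if i = 4 then c4 + c42*y$2 + c43*y$3 + c422*(y$2)^2 + c433*(y$3)^2 else 0)"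

lemma partial4_P: "partial4 i (\<lambda>y. P c0 c2 c3 c4 c22 c33 c23 c42 c43 c422 c433 y) x
   = dP i c0 c2 c3 c4 c22 c33 c23 c42 c43 c422 c433 x"
proof -
  have "((\<lambda>t. P c0 c2 c3 c4 c22 c33 c23 c42 c43 c422 c433 (x + t *\<^sub>R axis i 1))
      has_real_derivative dP i c0 c2 c3 c4 c22 c33 c23 c42 c43 c422 c433 x) (at 0)"
    using exhaust_4[of i]
    apply (elim disjE)
    apply (simp_all add: P_def dP_def axis_comp)
    apply (rule derivative_eq_intros refl | simp)+
    done
  then show ?thesis unfolding partial4_def by (rule DERIV_imp_deriv)
qed

lemma partial4_const: "partial4 i (\<lambda>y. c) x = 0"
  unfolding partial4_def by simp

lemma walkerF_P: "walkerF a b p q s = P 0 0 0 0 p s (2*q) 0 0 a b"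
  by (simp add: fun_eq_iff walkerF_def P_def algebra_simps)


lemma t1: "(\<lambda>y. walker_metric a b p q s y 4 4) = P 0 0 0 0 p s (2*q) 0 0 a b"
  apply (rule ext)
  apply (simp only: walker_metric_def)
  apply simp
  apply (simp add: walkerF_P)
  done

lemma partial4_g: "partial4 i (\<lambda>y. walker_metric a b p q s y j l) x =
   (if j = 4 \<and> l = 4 then dP i 0 0 0 0 p s (2*q) 0 0 a b x else 0)"
  using exhaust_4[of j] exhaust_4[of l]
  by (elim disjE) (simp_all add: walker_metric_def walkerF_P partial4_P partial4_const)
definition Gm :: "real \<Rightarrow> real \<Rightarrow> real \<Rightarrow> real \<Rightarrow> real \<Rightarrow> 4 \<Rightarrow> 4 \<Rightarrow> 4 \<Rightarrow> real^4 \<Rightarrow> real" where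
  "Gm a b p q s k i j y =
    (if k = 1 \<and> i = 4 \<and> j = 4 then P 0 0 0 0 (a/2) (b/2) 0 0 0 0 0 y
     else if k = 1 \<and> ((i = 4 \<and> j = 2) \<or> (i = 2 \<and> j = 4)) then P 0 p q 0 0 0 0 a 0 0 0 y
     else if k = 1 \<and> ((i = 4 \<and> j = 3) \<or> (i = 3 \<and> j = 4)) then P 0 q s 0 0 0 0 0 b 0 0 y
     else if k = 2 \<and> i = 4 \<and> j = 4 then P 0 (-p) (-q) 0 0 0 0 (-a) 0 0 0 y
     else if k = 3 \<and> i = 4 \<and> j = 4 then P 0 (-q) (-s) 0 0 0 0 0 (-b) 0 0 y
     else 0)"

definition dGm :: "real \<Rightarrow> real \<Rightarrow> real \<Rightarrow> real \<Rightarrow> real \<Rightarrow> 4 \<Rightarrow> 4 \<Rightarrow> 4 \<Rightarrow> 4 \<Rightarrow> real^4 \<Rightarrow> real" where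
  "dGm a b p q s m k i j y =
    (if k = 1 \<and> i = 4 \<and> j = 4 then dP m 0 0 0 0 (a/2) (b/2) 0 0 0 0 0 y
     else if k = 1 \<and> ((i = 4 \<and> j = 2) \<or> (i = 2 \<and> j = 4)) then dP m 0 p q 0 0 0 0 a 0 0 0 y
     else if k = 1 \<and> ((i = 4 \<and> j = 3) \<or> (i = 3 \<and> j = 4)) then dP m 0 q s 0 0 0 0 0 b 0 0 y
     else if k = 2 \<and> i = 4 \<and> j = 4 then dP m 0 (-p) (-q) 0 0 0 0 (-a) 0 0 0 y
     else if k = 3 \<and> i = 4 \<and> j = 4 then dP m 0 (-q) (-s) 0 0 0 0 0 (-b) 0 0 y
     else 0)"

lemma christ: "christoffel (walker_metric a b p q s) x k i j = Gm a b p q s k i j x"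
  unfolding christoffel_def ginv_walker partial4_g
  using exhaust_4[of k] exhaust_4[of i] exhaust_4[of j]
  apply (elim disjE) 
  apply (simp_all add: sum_4 Gm_def Ginv_def dP_def P_def walkerF_def)
  done

lemma christ_fun: "(\<lambda>y. christoffel (walker_metric a b p q s) y k i j) = Gm a b p q s k i j"
  by (simp add: fun_eq_iff christ)

lemma partial4_Gm: "partial4 m (Gm a b p q s k i j) x = dGm a b p q s m k i j x"
  using exhaust_4[of k] exhaust_4[of i] exhaust_4[of j]
  by (elim disjE) (simp_all add: Gm_def[abs_def] dGm_def partial4_P partial4_const)

lemma riem13_w: "riem13 (walker_metric a b p q s) x l k i j =
   dGm a b p q s i l j k x - dGm a b p q s j l i k x
   + (\<Sum>m\<in>UNIV. Gm a b p q s l i m x * Gm a b p q s m j k x - Gm a b p q s l j m x * Gm a b p q s m i k x)"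
  unfolding riem13_def christ_fun christ partial4_Gm ..

lemma ricci_w: "ricci (walker_metric a b p q s) x j h =
   (if j = 4 \<and> h = 4 then -((a+b)*x$4 + p + s) else 0)"
  unfolding ricci_def riem_def riem13_w ginv_walker
  using exhaust_4[of j] exhaust_4[of h]
  apply (elim disjE) 
  apply (simp_all add: sum_4 Gm_def dGm_def Ginv_def walker_metric_def dP_def P_def walkerF_def)
  apply (simp add: algebra_simps)
  done

lemma scal_w: "scal (walker_metric a b p q s) x = 0"
  unfolding scal_def ricci_w ginv_walker
  by (simp add: sum_4 Ginv_def)

lemma weyl_2424: "weyl (walker_metric a b p q s) x 2 4 2 4 = ((b-a)*x$4 + s - p)/2"
  unfolding weyl_def scal_w ricci_w riem_def riem13_w
  apply (simp add: sum_4 Gm_def dGm_def walker_metric_def dP_def P_def walkerF_def)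
  apply (simp add: field_simps)
  done
lemma weyl_2434: "weyl (walker_metric a b p q s) x 2 4 3 4 = -q"
  unfolding weyl_def scal_w ricci_w riem_def riem13_w
  by (simp add: sum_4 Gm_def dGm_def walker_metric_def dP_def P_def walkerF_def)

lemma weyl_zero: "weyl (walker_metric a a p 0 p) x i j k h = 0"
  unfolding weyl_def scal_w ricci_w riem_def riem13_w
  using exhaust_4[of i] exhaust_4[of j] exhaust_4[of k] exhaust_4[of h]
  apply (elim disjE)
  apply (simp_all add: sum_4 Gm_def dGm_def walker_metric_def dP_def P_def walkerF_def)
  done

lemma two_points:
  assumes "open (U::(real^4) set)" "U \<noteq> {}"
  obtains x y where "x \<in> U" "y \<in> U" "x$4 \<noteq> y$4"
proof -
  obtain x where x: "x \<in> U" using assms(2) by blast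
  obtain e where e: "e > 0" "ball x e \<subseteq> U" using assms(1) x open_contains_ball by blast
  define y where "y = x + (e/2) *\<^sub>R axis 4 (1::real)"
  have "dist x y = e/2" using e(1) by (simp add: y_def dist_norm norm_axis_1)
  then have "y \<in> U" using e by auto
  moreover have "x$4 \<noteq> y$4" using e(1) by (simp add: y_def)
  ultimately show ?thesis using x that by blast
qed

lemma lin0:
  fixes c0 d0 u0 v0 :: real
  assumes "c0 * u0 + d0 = 0" "c0 * v0 + d0 = 0" "u0 \<noteq> v0"
  shows "c0 = 0 \<and> d0 = 0"
proof -
  have "c0*(u0 - v0) = (c0 * u0 + d0) - (c0 * v0 + d0)" by (simp add: algebra_simps)
  then have "c0*(u0 - v0) = 0" using assms by simp
  then have "c0 = 0" using assms(3) by simp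
  then show ?thesis using assms by simp
qed

theorem mainTheorem2:
  fixes U :: "(real^4) set" and a b p q s :: real
  assumes "open U" and "U \<noteq> {}" and "a^2 + b^2 \<noteq> 0"
  shows "(einstein_on (walker_metric a b p q s) U \<longleftrightarrow> ricci_flat_on (walker_metric a b p q s) U)
       \<and> (ricci_flat_on (walker_metric a b p q s) U \<longleftrightarrow> b = -a \<and> s = -p)
       \<and> (conformally_flat_on (walker_metric a b p q s) U \<longleftrightarrow> b = a \<and> s = p \<and> q = 0)"
proof -
  obtain x0 y0 where xy: "x0 \<in> U" "y0 \<in> U" "x0$4 \<noteq> y0$4"
    using two_points[OF assms(1,2)] by blast
  have A: "einstein_on (walker_metric a b p q s) U \<longleftrightarrow> ricci_flat_on (walker_metric a b p q s) U"
  proof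
    assume "einstein_on (walker_metric a b p q s) U"
    then obtain c where c: "\<forall>x\<in>U. \<forall>i j. ricci (walker_metric a b p q s) x i j = c * walker_metric a b p q s x i j"
      unfolding einstein_on_def by blast
    have "ricci (walker_metric a b p q s) x0 1 4 = c * walker_metric a b p q s x0 1 4"
      using c xy(1) by blast
    then have "c = 0" by (simp add: ricci_w walker_metric_def)
    then show "ricci_flat_on (walker_metric a b p q s) U"
      using c unfolding ricci_flat_on_def by simp
  next
    assume "ricci_flat_on (walker_metric a b p q s) U"
    then show "einstein_on (walker_metric a b p q s) U"
      unfolding ricci_flat_on_def einstein_on_def by (intro exI[of _ 0]) simp
  qed
  have B: "ricci_flat_on (walker_metric a b p q s) U \<longleftrightarrow> b = -a \<and> s = -p"
  proof
    assume h: "ricci_flat_on (walker_metric a b p q s) U"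
    have "(a+b)*x0$4 + (p+s) = 0" "(a+b)*y0$4 + (p+s) = 0"
      using h xy unfolding ricci_flat_on_def ricci_w
      by (metis (no_types, lifting) add.assoc add.inverse_neutral neg_equal_0_iff_equal)+
    from lin0[OF this xy(3)] show "b = -a \<and> s = -p" by linarith
  next
    assume "b = -a \<and> s = -p"
    then show "ricci_flat_on (walker_metric a b p q s) U"
      unfolding ricci_flat_on_def ricci_w by simp
  qed
  have C: "conformally_flat_on (walker_metric a b p q s) U \<longleftrightarrow> b = a \<and> s = p \<and> q = 0"
  proof
    assume h: "conformally_flat_on (walker_metric a b p q s) U"
    have "((b-a)*x0$4 + s - p)/2 = 0" "((b-a)*y0$4 + s - p)/2 = 0" "-q = 0"
      using h xy unfolding conformally_flat_on_def by (metis weyl_2424 weyl_2434)+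
    then have "(b-a)*x0$4 + (s - p) = 0" "(b-a)*y0$4 + (s - p) = 0" "q = 0" by simp_all
    from lin0[OF this(1,2) xy(3)] this(3) show "b = a \<and> s = p \<and> q = 0" by simp
  next
    assume "b = a \<and> s = p \<and> q = 0"
    then show "conformally_flat_on (walker_metric a b p q s) U"
      unfolding conformally_flat_on_def using weyl_zero by simp
  qed
  show ?thesis using A B C by blast
qed
end
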